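(* For any $x\in\mathbb{R}^n$, $\frac{\mu_1}{2}d(x,P)^2\le f(x)\le\frac{\mu_2}{2}d(x,P)^2$, where $0<\mu_1=\frac{1}{mL^2}\le\mu_2=\min\{1,\frac{\beta}{m}\lambda_{\max}(A^TA)\}\le1$.
   Context: Let $A\in\mathbb{R}^{m\times n}$ have rows $a_1^T,\dots,a_m^T$ with $\|a_i\|_2=1$, and $b\in\mathbb{R}^m$; assume $Ax\le b$ is consistent and let $P=\{x:Ax\le b\}$, $\mathcal{P}(x)$ the Euclidean projection onto $P$, $d(x,P)=\|x-\mathcal{P}(x)\|$, $t^+=\max\{t,0\}$ (entrywise on vectors). Fix an integer $1\le\beta\le m$. Sampling distribution $\mathbb{S}$ at $x$: $\tau\subseteq\{1,\dots,m\}$ with $|\tau|=\beta$ uniformly at random among all $\binom m\beta$ subsets, and $i^*\in\tau$ maximizing $(a_i^Tx-b_i)^+$ over $\tau$; $\mathbb{E}_{\mathbb{S}}$ is expectation over $\tau$. $f(x)=\mathbb{E}_{\mathbb{S}}[\frac12|(a_{i^*}^Tx-b_{i^*})^+|^2]$. $L>0$ is a Hoffman constant: $d(x,P)^2\le L^2\|(Ax-b)^+\|^2$ for all $x$. *)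

theory Defs
  imports "HOL-Analysis.Analysis"
begin

definition pos_part :: "real^'m \<Rightarrow> real^'m" where
  "pos_part v = (\<chi> i. max (v $ i) 0)"

definition polyhedron :: "real^'n^'m \<Rightarrow> real^'m \<Rightarrow> (real^'n) set" where
  "polyhedron A b = {x. \<forall>i. (A *v x) $ i \<le> b $ i}"

definition lambda_max :: "real^'n^'n \<Rightarrow> real" where
  "lambda_max M = Max {l. \<exists>v. v \<noteq> 0 \<and> M *v v = l *\<^sub>R v}"

definition sampled_f :: "real^'n^'m \<Rightarrow> real^'m \<Rightarrow> nat \<Rightarrow> real^'n \<Rightarrow> real" where
  "sampled_f A b \<beta> x =
     (\<Sum>\<tau>\<in>{\<tau>::'m set. card \<tau> = \<beta>}.
        (1/2) * (Max ((\<lambda>i. max ((A *v x) $ i - b $ i) 0) ` \<tau>))\<^sup>2)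
     / real (CARD('m) choose \<beta>)"

end

theory Submission
  imports Defs
begin

lemma ata_inner:
  fixes A :: "real^'n^'m"
  shows "((transpose A ** A) *v y) \<bullet> z = (A *v y) \<bullet> (A *v z)"
proof -
  have "(transpose A ** A) *v y = transpose A *v (A *v y)"
    by (simp add: matrix_vector_mul_assoc)
  also have "\<dots> = (A *v y) v* A"
    using vector_transpose_matrix[of "A *v y" "transpose A"] by simp
  finally show ?thesis by (simp add: dot_lmul_matrix)
qed

lemma norm_add_scale_sq:
  fixes a b :: "'a::real_inner"
  shows "(norm (a + t *\<^sub>R b))\<^sup>2 = (norm a)\<^sup>2 + 2 * t * (a \<bullet> b) + t\<^sup>2 * (norm b)\<^sup>2"
  unfolding power2_norm_eq_inner
  by (simp add: inner_add_left inner_add_right inner_commute power2_eq_square algebra_simps)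

lemma rayleigh_max:
  fixes A :: "real^'n^'m"
  obtains v where "norm v = 1" "\<And>y. (norm (A *v y))\<^sup>2 \<le> (norm (A *v v))\<^sup>2 * (norm y)\<^sup>2"
proof -
  have "compact (sphere (0::real^'n) 1)" by simp
  moreover have "sphere (0::real^'n) 1 \<noteq> {}" by simp
  moreover have c: "continuous_on (sphere (0::real^'n) 1) (\<lambda>y. A *v y)"
    by (simp add: linear_continuous_on matrix_vector_mul_linear)
  moreover have "continuous_on (sphere (0::real^'n) 1) (\<lambda>y. (norm (A *v y))\<^sup>2)"
    by (intro continuous_on_power continuous_on_norm c)
  ultimately have "\<exists>x\<in>sphere 0 1. \<forall>y\<in>sphere 0 1. (norm (A *v y))\<^sup>2 \<le> (norm (A *v x))\<^sup>2"
    by (intro continuous_attains_sup) 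
  then obtain v where v: "v \<in> sphere 0 1" and mx: "\<And>y. y \<in> sphere 0 1 \<Longrightarrow> (norm (A *v y))\<^sup>2 \<le> (norm (A *v v))\<^sup>2"
    by blast
  have "(norm (A *v y))\<^sup>2 \<le> (norm (A *v v))\<^sup>2 * (norm y)\<^sup>2" for y
  proof (cases "y = 0")
    case True then show ?thesis by simp
  next
    case False
    then have ny: "norm y > 0" by simp
    have "(inverse (norm y)) *\<^sub>R y \<in> sphere 0 1" using ny by simp
    from mx[OF this] have a: "(norm (A *v ((inverse (norm y)) *\<^sub>R y)))\<^sup>2 \<le> (norm (A *v v))\<^sup>2" .
    have "A *v ((inverse (norm y)) *\<^sub>R y) = (inverse (norm y)) *\<^sub>R (A *v y)"
      by (rule matrix_vector_mult_scaleR)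
    then have "norm (A *v ((inverse (norm y)) *\<^sub>R y)) = norm (A *v y) / norm y"
      using ny by (simp add: divide_inverse_commute)
    with a have "(norm (A *v y))\<^sup>2 / (norm y)\<^sup>2 \<le> (norm (A *v v))\<^sup>2"
      by (simp add: power_divide)
    then show ?thesis using ny by (simp add: pos_divide_le_eq)
  qed
  then show ?thesis using that v by simp
qed

lemma eigen_of_max:
  fixes A :: "real^'n^'m"
  assumes nv: "norm v = 1" and mx: "\<And>y. (norm (A *v y))\<^sup>2 \<le> lam * (norm y)\<^sup>2"
    and lam: "lam = (norm (A *v v))\<^sup>2"
  shows "(transpose A ** A) *v v = lam *\<^sub>R v"
proof -
  define M where "M = transpose A ** A"
  define w where "w = M *v v - lam *\<^sub>R v"
  define c where "c = w \<bullet> w"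
  define K where "K = (norm (A *v w))\<^sup>2 - lam * (norm w)\<^sup>2"
  have key: "2 * t * c + t\<^sup>2 * K \<le> 0" for t
  proof -
    have i1: "(norm (A *v (v + t *\<^sub>R w)))\<^sup>2 \<le> lam * (norm (v + t *\<^sub>R w))\<^sup>2" by (rule mx)
    have e1: "(norm (A *v (v + t *\<^sub>R w)))\<^sup>2 = (norm (A *v v))\<^sup>2 + 2 * t * ((A *v v) \<bullet> (A *v w)) + t\<^sup>2 * (norm (A *v w))\<^sup>2"
      by (simp only: matrix_vector_right_distrib matrix_vector_mult_scaleR norm_add_scale_sq)
    have e2: "(norm (v + t *\<^sub>R w))\<^sup>2 = 1 + 2 * t * (v \<bullet> w) + t\<^sup>2 * (norm w)\<^sup>2"
      using nv by (simp add: norm_add_scale_sq)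
    have e3: "(A *v v) \<bullet> (A *v w) = c + lam * (v \<bullet> w)"
      unfolding c_def M_def[symmetric] ata_inner[symmetric] M_def[symmetric]
      by (simp add: w_def inner_diff_left algebra_simps)
    have "lam + 2 * t * (c + lam * (v \<bullet> w)) + t\<^sup>2 * (norm (A *v w))\<^sup>2
          \<le> lam * (1 + 2 * t * (v \<bullet> w) + t\<^sup>2 * (norm w)\<^sup>2)"
      using i1 unfolding e1 e2 e3 lam[symmetric] .
    then show ?thesis unfolding K_def by (simp add: algebra_simps)
  qed
  have "c \<le> 0"
  proof (rule ccontr)
    assume "\<not> c \<le> 0"
    then have cp: "c > 0" by simp
    define t where "t = c / (\<bar>K\<bar> + 1)"
    have tp: "t > 0" using cp by (simp add: t_def)
    have "t * \<bar>K\<bar> \<le> c" unfolding t_def using cp by (simp add: field_simps)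
    moreover have "\<bar>t * K\<bar> = t * \<bar>K\<bar>" using tp by (simp add: abs_mult)
    moreover have "- (t * K) \<le> \<bar>t * K\<bar>" by (rule abs_ge_minus_self)
    ultimately have "t * K \<ge> - c" by linarith
    moreover have "t * (2 * c + t * K) \<le> 0" using key[of t] by (simp add: algebra_simps power2_eq_square)
    then have "2 * c + t * K \<le> 0" using tp by (simp add: mult_le_0_iff)
    ultimately show False using cp by linarith
  qed
  then have "w = 0" unfolding c_def by (metis antisym inner_ge_zero inner_eq_zero_iff)
  then show ?thesis unfolding w_def M_def by simp
qed

lemma finite_eigs:
  fixes A :: "real^'n^'m"
  shows "finite {l. \<exists>v. v \<noteq> 0 \<and> (transpose A ** A) *v v = l *\<^sub>R v}"
proof -
  define M where "M = transpose A ** A"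
  define E where "E = {l. \<exists>v. v \<noteq> 0 \<and> M *v v = l *\<^sub>R v}"
  define f where "f l = (SOME v. v \<noteq> 0 \<and> M *v v = l *\<^sub>R v)" for l
  have fE: "f l \<noteq> 0 \<and> M *v f l = l *\<^sub>R f l" if "l \<in> E" for l
    using that unfolding E_def f_def by (metis (mono_tags, lifting) mem_Collect_eq someI_ex)
  have sym: "(M *v u) \<bullet> z = u \<bullet> (M *v z)" for u z
    unfolding M_def using ata_inner[of A u z] ata_inner[of A z u] by (simp add: inner_commute)
  have inj: "inj_on f E"
  proof (rule inj_onI)
    fix l k assume "l \<in> E" "k \<in> E" "f l = f k"
    then have "l *\<^sub>R f l = k *\<^sub>R f l" "f l \<noteq> 0" using fE by metis+
    then show "l = k" by simp
  qed
  have "pairwise orthogonal (f ` E)"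
  proof (auto simp: pairwise_def)
    fix l k assume l: "l \<in> E" and k: "k \<in> E" and ne: "f l \<noteq> f k"
    then have lk: "l \<noteq> k" by auto
    have "l * (f l \<bullet> f k) = (M *v f l) \<bullet> f k" using fE[OF l] by simp
    also have "\<dots> = f l \<bullet> (M *v f k)" by (rule sym)
    also have "\<dots> = k * (f l \<bullet> f k)" using fE[OF k] by simp
    finally have "(l - k) * (f l \<bullet> f k) = 0" by (simp add: algebra_simps)
    then show "orthogonal (f l) (f k)" using lk by (simp add: orthogonal_def)
  qed
  moreover have "0 \<notin> f ` E" using fE by auto
  ultimately have "independent (f ` E)" by (rule pairwise_orthogonal_independent)
  then have "finite (f ` E)" by (rule independent_imp_finite)
  then have "finite E" using inj finite_imageD by blast
  then show ?thesis unfolding E_def M_def .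
qed

lemma rayleigh:
  fixes A :: "real^'n^'m"
  shows "(norm (A *v y))\<^sup>2 \<le> lambda_max (transpose A ** A) * (norm y)\<^sup>2"
proof -
  obtain v where nv: "norm v = 1" and mx: "\<And>y. (norm (A *v y))\<^sup>2 \<le> (norm (A *v v))\<^sup>2 * (norm y)\<^sup>2"
    using rayleigh_max[of A] by blast
  define lam where "lam = (norm (A *v v))\<^sup>2"
  have "(transpose A ** A) *v v = lam *\<^sub>R v"
    using eigen_of_max[OF nv _ lam_def] mx lam_def by blast
  moreover have "v \<noteq> 0" using nv by auto
  ultimately have "lam \<in> {l. \<exists>v. v \<noteq> 0 \<and> (transpose A ** A) *v v = l *\<^sub>R v}" by blast
  then have "lam \<le> lambda_max (transpose A ** A)"
    unfolding lambda_max_def using finite_eigs[of A] by (simp add: Max_ge)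
  then have "lam * (norm y)\<^sup>2 \<le> lambda_max (transpose A ** A) * (norm y)\<^sup>2"
    by (simp add: mult_right_mono)
  moreover have "(norm (A *v y))\<^sup>2 \<le> lam * (norm y)\<^sup>2" using mx[of y] by (simp add: lam_def)
  ultimately show ?thesis by linarith
qed

lemma card_subsets_containing:
  fixes i :: "'m::finite"
  assumes "1 \<le> \<beta>"
  shows "card {\<tau>::'m set. card \<tau> = \<beta> \<and> i \<in> \<tau>} = (CARD('m) - 1) choose (\<beta> - 1)"
proof -
  have eq: "{\<tau>::'m set. card \<tau> = \<beta> \<and> i \<in> \<tau>} = insert i ` {\<sigma>. \<sigma> \<subseteq> -{i} \<and> card \<sigma> = \<beta> - 1}"
  proof (rule set_eqI, rule iffI)
    fix \<tau> assume "\<tau> \<in> {\<tau>::'m set. card \<tau> = \<beta> \<and> i \<in> \<tau>}"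
    then have h: "card \<tau> = \<beta>" "i \<in> \<tau>" by auto
    then have "\<tau> = insert i (\<tau> - {i})" by auto
    moreover have "\<tau> - {i} \<in> {\<sigma>. \<sigma> \<subseteq> -{i} \<and> card \<sigma> = \<beta> - 1}"
      using h by (auto simp: card_Diff_singleton)
    ultimately show "\<tau> \<in> insert i ` {\<sigma>. \<sigma> \<subseteq> -{i} \<and> card \<sigma> = \<beta> - 1}" by blast
  next
    fix \<tau> assume "\<tau> \<in> insert i ` {\<sigma>. \<sigma> \<subseteq> -{i} \<and> card \<sigma> = \<beta> - 1}"
    then obtain \<sigma> where s: "\<tau> = insert i \<sigma>" "\<sigma> \<subseteq> -{i}" "card \<sigma> = \<beta> - 1" by blast
    then have "i \<notin> \<sigma>" by auto
    then have "card \<tau> = Suc (\<beta> - 1)" using s by simp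
    then show "\<tau> \<in> {\<tau>::'m set. card \<tau> = \<beta> \<and> i \<in> \<tau>}" using assms s by simp
  qed
  have inj: "inj_on (insert i) {\<sigma>. \<sigma> \<subseteq> -{i} \<and> card \<sigma> = \<beta> - 1}"
  proof (rule inj_onI)
    fix s1 s2 assume "s1 \<in> {\<sigma>. \<sigma> \<subseteq> -{i} \<and> card \<sigma> = \<beta> - 1}" "s2 \<in> {\<sigma>. \<sigma> \<subseteq> -{i} \<and> card \<sigma> = \<beta> - 1}"
      "insert i s1 = insert i s2"
    then show "s1 = s2" by (metis ComplD Diff_insert_absorb mem_Collect_eq singletonI subsetD)
  qed
  have "card (-{i}) = CARD('m) - 1"
    by (simp add: Compl_eq_Diff_UNIV card_Diff_singleton)
  then show ?thesis unfolding eq using card_image[OF inj] n_subsets[of "-{i}" "\<beta> - 1"] by simp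
qed

lemma card_subsets:
  shows "card {\<tau>::('m::finite) set. card \<tau> = \<beta>} = CARD('m) choose \<beta>"
  using n_subsets[of "UNIV::'m set" \<beta>] by simp

lemma sum_subsets:
  fixes g :: "'m::finite \<Rightarrow> real"
  assumes "1 \<le> \<beta>"
  shows "(\<Sum>\<tau>\<in>{\<tau>::'m set. card \<tau> = \<beta>}. \<Sum>i\<in>\<tau>. g i) = real ((CARD('m) - 1) choose (\<beta> - 1)) * (\<Sum>i\<in>UNIV. g i)"
proof -
  let ?T = "{\<tau>::'m set. card \<tau> = \<beta>}"
  have "(\<Sum>\<tau>\<in>?T. \<Sum>i\<in>\<tau>. g i) = (\<Sum>\<tau>\<in>?T. \<Sum>i\<in>UNIV. if i \<in> \<tau> then g i else 0)"
    by (rule sum.cong) (simp_all add: sum.If_cases Int_def)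
  also have "\<dots> = (\<Sum>i\<in>UNIV. \<Sum>\<tau>\<in>?T. if i \<in> \<tau> then g i else 0)"
    by (rule sum.swap)
  also have "\<dots> = (\<Sum>i\<in>UNIV. real ((CARD('m) - 1) choose (\<beta> - 1)) * g i)"
  proof (rule sum.cong)
    fix i :: 'm
    have "(\<Sum>\<tau>\<in>?T. if i \<in> \<tau> then g i else 0) = real (card (?T \<inter> {\<tau>. i \<in> \<tau>})) * g i"
      by (simp add: sum.If_cases)
    also have "?T \<inter> {\<tau>. i \<in> \<tau>} = {\<tau>::'m set. card \<tau> = \<beta> \<and> i \<in> \<tau>}" by auto
    finally show "(\<Sum>\<tau>\<in>?T. if i \<in> \<tau> then g i else 0) = real ((CARD('m) - 1) choose (\<beta> - 1)) * g i"
      using card_subsets_containing[OF assms, of i] by simp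
  qed simp
  finally show ?thesis by (simp add: sum_distrib_left)
qed

lemma choose_rel:
  assumes "1 \<le> \<beta>" "0 < m"
  shows "real m * real ((m - 1) choose (\<beta> - 1)) = real \<beta> * real (m choose \<beta>)"
proof -
  have "Suc (m - 1) * ((m - 1) choose (\<beta> - 1)) = (Suc (m - 1) choose Suc (\<beta> - 1)) * Suc (\<beta> - 1)"
    by (rule Suc_times_binomial_eq)
  then have "m * ((m - 1) choose (\<beta> - 1)) = (m choose \<beta>) * \<beta>" using assms by simp
  then show ?thesis by (metis of_nat_mult mult.commute)
qed

theorem lemma6:
  fixes A :: "real^'n^'m" and b :: "real^'m" and \<beta> :: nat and L :: real
  assumes rows: "\<And>i. norm (A $ i) = 1"
    and consistent: "polyhedron A b \<noteq> {}"
    and beta: "1 \<le> \<beta>" "\<beta> \<le> CARD('m)"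
    and Lpos: "L > 0"
    and hoffman: "\<And>x. (infdist x (polyhedron A b))\<^sup>2 \<le> L\<^sup>2 * (norm (pos_part (A *v x - b)))\<^sup>2"
  shows "let \<mu>1 = 1 / (real CARD('m) * L\<^sup>2);
             \<mu>2 = min 1 (real \<beta> / real CARD('m) * lambda_max (transpose A ** A))
         in 0 < \<mu>1 \<and> \<mu>1 \<le> \<mu>2 \<and> \<mu>2 \<le> 1 \<and>
            (\<forall>x. \<mu>1 / 2 * (infdist x (polyhedron A b))\<^sup>2 \<le> sampled_f A b \<beta> x \<and>
                 sampled_f A b \<beta> x \<le> \<mu>2 / 2 * (infdist x (polyhedron A b))\<^sup>2)"
proof -
  define P where "P = polyhedron A b"
  define m where "m = CARD('m)"
  define lam where "lam = lambda_max (transpose A ** A)"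
  define \<mu>1 where "\<mu>1 = 1 / (real m * L\<^sup>2)"
  define \<mu>2 where "\<mu>2 = min 1 (real \<beta> / real m * lam)"
  define T where "T = {\<tau>::'m set. card \<tau> = \<beta>}"
  define C where "C = real (m choose \<beta>)"
  define C' where "C' = real ((m - 1) choose (\<beta> - 1))"
  have mpos: "0 < m" unfolding m_def by simp
  have bpos: "0 < real \<beta>" using beta by simp
  have Cpos: "0 < C" unfolding C_def using beta m_def by simp
  have cardT: "real (card T) = C" unfolding T_def C_def m_def by (simp add: card_subsets)
  have rel: "real m * C' = real \<beta> * C" unfolding C'_def C_def using choose_rel[OF beta(1) mpos] .
  have Pne: "P \<noteq> {}" using consistent P_def by simp
  have Peq: "P = (\<Inter>i. {x. A $ i \<bullet> x \<le> b $ i})"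
    unfolding P_def polyhedron_def by (auto simp: matrix_vector_mul_component)
  have closedP: "closed P" unfolding Peq by (intro closed_INT ballI closed_halfspace_le)
  have sqsum: "(norm v)\<^sup>2 = (\<Sum>i\<in>UNIV. (v $ i)\<^sup>2)" for v :: "real^'m"
    unfolding power2_norm_eq_inner inner_vec_def by (simp add: power2_eq_square)
  have bounds: "\<mu>1 / 2 * (infdist x P)\<^sup>2 \<le> sampled_f A b \<beta> x \<and>
                 sampled_f A b \<beta> x \<le> \<mu>2 / 2 * (infdist x P)\<^sup>2" for x
  proof -
    define r where "r i = max ((A *v x) $ i - b $ i) 0" for i
    define d where "d = infdist x P"
    obtain p where pP: "p \<in> P" and dp: "infdist x P = dist x p"
      using infdist_attains_inf[OF closedP Pne] by blast
    have dn: "d = norm (x - p)" using dp d_def by (simp add: dist_norm)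
    have pb: "A $ i \<bullet> p \<le> b $ i" for i using pP unfolding Peq by blast
    have r0: "0 \<le> r i" for i unfolding r_def by simp
    have rle: "r i \<le> \<bar>(A *v (x - p)) $ i\<bar>" for i
    proof -
      have "(A *v x) $ i - b $ i \<le> (A *v (x - p)) $ i"
        using pb[of i] by (simp add: matrix_vector_mul_component inner_diff_right)
      then show ?thesis unfolding r_def by simp
    qed
    have rd: "r i \<le> d" for i
    proof -
      have "(A *v (x - p)) $ i \<le> \<bar>(A *v (x - p)) $ i\<bar>" by simp
      have "\<bar>(A *v (x - p)) $ i\<bar> = \<bar>A $ i \<bullet> (x - p)\<bar>" by (simp add: matrix_vector_mul_component)
      also have "\<dots> \<le> norm (A $ i) * norm (x - p)" by (rule Cauchy_Schwarz_ineq2)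
      also have "\<dots> = d" using rows dn by simp
      finally show ?thesis using rle[of i] by linarith
    qed
    define S where "S = (\<Sum>i\<in>UNIV. (r i)\<^sup>2)"
    have Snorm: "(norm (pos_part (A *v x - b)))\<^sup>2 = S"
      unfolding sqsum S_def r_def pos_part_def by simp
    have Slam: "S \<le> lam * d\<^sup>2"
    proof -
      have "S \<le> (\<Sum>i\<in>UNIV. ((A *v (x - p)) $ i)\<^sup>2)"
        unfolding S_def
      proof (rule sum_mono)
        fix i
        have "(r i)\<^sup>2 \<le> (\<bar>(A *v (x - p)) $ i\<bar>)\<^sup>2" by (rule power_mono[OF rle[of i] r0[of i]])
        then show "(r i)\<^sup>2 \<le> ((A *v (x - p)) $ i)\<^sup>2" by simp
      qed
      also have "\<dots> = (norm (A *v (x - p)))\<^sup>2" by (simp add: sqsum)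
      also have "\<dots> \<le> lam * (norm (x - p))\<^sup>2" unfolding lam_def by (rule rayleigh)
      finally show ?thesis using dn by simp
    qed
    have hof: "d\<^sup>2 \<le> L\<^sup>2 * S" using hoffman[of x] Snorm d_def P_def by simp
    define M where "M \<tau> = Max (r ` \<tau>)" for \<tau>
    define SM where "SM = (\<Sum>\<tau>\<in>T. (M \<tau>)\<^sup>2)"
    have f_eq: "sampled_f A b \<beta> x = (1/2 * SM) / C"
      unfolding sampled_f_def SM_def M_def r_def T_def C_def m_def by (simp add: sum_distrib_left)
    have tauprops: "finite \<tau> \<and> \<tau> \<noteq> {}" if "\<tau> \<in> T" for \<tau>
      using that beta unfolding T_def by auto
    have Mge: "r i \<le> M \<tau>" if "\<tau> \<in> T" "i \<in> \<tau>" for \<tau> i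
      unfolding M_def using tauprops[OF that(1)] that(2) by (intro Max_ge) auto
    have Mex: "\<exists>j\<in>\<tau>. M \<tau> = r j" if "\<tau> \<in> T" for \<tau>
    proof -
      have "M \<tau> \<in> r ` \<tau>" unfolding M_def using tauprops[OF that] by (intro Max_in) auto
      then show ?thesis by auto
    qed
    have low_tau: "(\<Sum>i\<in>\<tau>. (r i)\<^sup>2) \<le> real \<beta> * (M \<tau>)\<^sup>2" if "\<tau> \<in> T" for \<tau>
    proof -
      have "(\<Sum>i\<in>\<tau>. (r i)\<^sup>2) \<le> real (card \<tau>) * (M \<tau>)\<^sup>2"
        by (rule sum_bounded_above) (intro power_mono Mge[OF that] r0)
      then show ?thesis using that unfolding T_def by simp
    qed
    have up_tau: "(M \<tau>)\<^sup>2 \<le> (\<Sum>i\<in>\<tau>. (r i)\<^sup>2)" if tT: "\<tau> \<in> T" for \<tau>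
    proof -
      obtain j where j: "j \<in> \<tau>" "M \<tau> = r j" using Mex[OF tT] by blast
      have "(r j)\<^sup>2 \<le> (\<Sum>i\<in>\<tau>. (r i)\<^sup>2)"
        by (rule member_le_sum) (use j tauprops[OF tT] in auto)
      then show ?thesis using j by simp
    qed
    have d_tau: "(M \<tau>)\<^sup>2 \<le> d\<^sup>2" if tT: "\<tau> \<in> T" for \<tau>
    proof -
      obtain j where j: "j \<in> \<tau>" "M \<tau> = r j" using Mex[OF tT] by blast
      show ?thesis using j power_mono[OF rd[of j] r0[of j]] by simp
    qed
    have sumQ: "(\<Sum>\<tau>\<in>T. \<Sum>i\<in>\<tau>. (r i)\<^sup>2) = C' * S"
      unfolding T_def C'_def S_def m_def by (rule sum_subsets[OF beta(1)])
    have SM1: "C' * S \<le> real \<beta> * SM"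
    proof -
      have "(\<Sum>\<tau>\<in>T. \<Sum>i\<in>\<tau>. (r i)\<^sup>2) \<le> (\<Sum>\<tau>\<in>T. real \<beta> * (M \<tau>)\<^sup>2)"
        by (rule sum_mono) (rule low_tau)
      then show ?thesis unfolding sumQ SM_def by (simp add: sum_distrib_left)
    qed
    have SM2: "SM \<le> C' * S"
    proof -
      have "SM \<le> (\<Sum>\<tau>\<in>T. \<Sum>i\<in>\<tau>. (r i)\<^sup>2)" unfolding SM_def by (rule sum_mono) (rule up_tau)
      then show ?thesis unfolding sumQ .
    qed
    have SM3: "SM \<le> C * d\<^sup>2"
    proof -
      have "SM \<le> real (card T) * d\<^sup>2" unfolding SM_def by (rule sum_bounded_above) (rule d_tau)
      then show ?thesis using cardT by simp
    qed
    have S0: "0 \<le> S" unfolding S_def by (simp add: sum_nonneg)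
    have "real \<beta> * (C * S) = real m * C' * S" by (simp only: rel mult.assoc)
    also have "\<dots> \<le> real m * (real \<beta> * SM)" using SM1 mpos by (simp add: mult.assoc)
    also have "\<dots> = real \<beta> * (real m * SM)" by (simp only: mult.left_commute)
    finally have "real \<beta> * (C * S) \<le> real \<beta> * (real m * SM)" .
    then have CS: "C * S \<le> real m * SM" using bpos by simp
    have "C * d\<^sup>2 \<le> C * (L\<^sup>2 * S)" using hof Cpos by simp
    also have "\<dots> = L\<^sup>2 * (C * S)" by simp
    also have "\<dots> \<le> L\<^sup>2 * (real m * SM)" using CS by (simp add: mult_left_mono)
    finally have low: "C * d\<^sup>2 \<le> L\<^sup>2 * (real m * SM)" .
    have lowg: "\<mu>1 / 2 * d\<^sup>2 \<le> (1/2 * SM) / C"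
      unfolding \<mu>1_def using low Cpos mpos Lpos by (simp add: field_simps)
    have "real m * SM \<le> real m * (C' * S)" using SM2 mpos by simp
    also have "\<dots> = real \<beta> * C * S" using rel by (simp add: mult.assoc[symmetric])
    also have "\<dots> \<le> real \<beta> * C * (lam * d\<^sup>2)" using Slam bpos Cpos by simp
    finally have up1: "real m * SM \<le> real \<beta> * C * (lam * d\<^sup>2)" .
    have upg1: "(1/2 * SM) / C \<le> (real \<beta> / real m * lam) / 2 * d\<^sup>2"
      using up1 Cpos mpos by (simp add: field_simps)
    have upg2: "(1/2 * SM) / C \<le> 1 / 2 * d\<^sup>2"
      using SM3 Cpos by (simp add: field_simps)
    have upg: "(1/2 * SM) / C \<le> \<mu>2 / 2 * d\<^sup>2"
    proof -
      have "\<mu>2 = 1 \<or> \<mu>2 = real \<beta> / real m * lam" unfolding \<mu>2_def by (simp add: min_def)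
      then show ?thesis using upg1 upg2 by (elim disjE) simp_all
    qed
    show ?thesis using lowg upg f_eq d_def by simp
  qed
  have pos1: "0 < \<mu>1" unfolding \<mu>1_def using mpos Lpos by simp
  have le2: "\<mu>2 \<le> 1" unfolding \<mu>2_def by simp
  obtain i0 :: 'm where True by blast
  define x0 where "x0 = (\<bar>b $ i0\<bar> + 1) *\<^sub>R A $ i0"
  have ax0: "(A *v x0) $ i0 = \<bar>b $ i0\<bar> + 1"
    unfolding x0_def matrix_vector_mul_component using rows[of i0]
    by (simp add: power2_norm_eq_inner[symmetric])
  have "\<not> (A *v x0) $ i0 \<le> b $ i0" unfolding ax0 by linarith
  then have "x0 \<notin> P" unfolding P_def polyhedron_def by auto
  then have "infdist x0 P \<noteq> 0" using in_closed_iff_infdist_zero[OF closedP Pne] by simp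
  then have dpos: "0 < (infdist x0 P)\<^sup>2" by simp
  have "\<mu>1 / 2 * (infdist x0 P)\<^sup>2 \<le> \<mu>2 / 2 * (infdist x0 P)\<^sup>2"
    using bounds[of x0] by linarith
  then have le12: "\<mu>1 \<le> \<mu>2" using dpos by simp
  show ?thesis
    unfolding Let_def using pos1 le2 le12 bounds
    unfolding \<mu>1_def \<mu>2_def P_def m_def lam_def by blast
qed

end
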